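(* Let $\lambda>0$. For all $x,y>0$, $$\frac{\Gamma(\lambda+y)}{\Gamma(y)}\, B\Big(\lambda, y; \frac{x}{x+y}\Big)=\Gamma(\lambda)-x^{\lambda}\int_0^\infty \frac{\gamma(y,yt)}{\Gamma(y)}\,t^{\lambda-1}e^{-xt}\,dt,$$ where $B(a_1,a_2;u)=\int_0^u t^{a_1-1}(1-t)^{a_2-1}\,dt$ is the incomplete Beta function and $\gamma(a,x)=\int_0^x e^{-t}t^{a-1}\,dt$ is the incomplete gamma function. *)

theory Defs
  imports "HOL-Analysis.Analysis"
begin

definition inc_beta :: "real \<Rightarrow> real \<Rightarrow> real \<Rightarrow> real" where
  "inc_beta a1 a2 u = (LBINT t=0..u. t powr (a1 - 1) * (1 - t) powr (a2 - 1))"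

definition lower_inc_gamma :: "real \<Rightarrow> real \<Rightarrow> real" where
  "lower_inc_gamma a x = (LBINT t=0..x. exp (- t) * t powr (a - 1))"

end

theory Submission
  imports Defs
begin


lemma gamma_nn:
  fixes a b :: real assumes a: "a > 0" and b: "b > 0"
  shows "(\<integral>\<^sup>+t. ennreal (indicator {0<..} t * (t powr (a-1) * exp (-(b*t)))) \<partial>lborel)
         = ennreal (Gamma a / b powr a)"
proof -
  have 1: "(\<integral>\<^sup>+t. ennreal (indicator {0..} t * (t powr (a-1) / exp t)) \<partial>lborel) = ennreal (Gamma a)"
    by (rule nn_integral_has_integral_lebesgue[OF _ Gamma_integral_real[OF a]]) auto
  have 2: "(\<integral>\<^sup>+t. ennreal (indicator {0<..} t * (t powr (a-1) * exp (-t))) \<partial>lborel) = ennreal (Gamma a)"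
    unfolding 1[symmetric]
    by (intro nn_integral_cong_AE eventually_mono[OF AE_lborel_singleton[of 0]])
       (auto simp: indicator_def exp_minus field_simps)
  define I where "I = (\<integral>\<^sup>+t. ennreal (indicator {0<..} t * (t powr (a-1) * exp (-(b*t)))) \<partial>lborel)"
  have 3: "(\<integral>\<^sup>+t. ennreal (indicator {0<..} t * (t powr (a-1) * exp (-t))) \<partial>lborel)
      = ennreal b * (\<integral>\<^sup>+t. ennreal (indicator {0<..} (0 + b * t) * ((0 + b*t) powr (a-1) * exp (-(0 + b*t)))) \<partial>lborel)"
    using nn_integral_real_affine[where c=b and t=0 and f="\<lambda>t. ennreal (indicator {0<..} t * (t powr (a-1) * exp (-t)))"] b
    by auto
  also have "(\<integral>\<^sup>+t. ennreal (indicator {0<..} (0 + b * t) * ((0 + b*t) powr (a-1) * exp (-(0 + b*t)))) \<partial>lborel)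
     = (\<integral>\<^sup>+t. ennreal (b powr (a-1)) * ennreal (indicator {0<..} t * (t powr (a-1) * exp (-(b*t)))) \<partial>lborel)"
    using b by (intro nn_integral_cong) (auto simp: indicator_def powr_mult ennreal_mult'[symmetric] zero_less_mult_iff)
  also have "\<dots> = ennreal (b powr (a-1)) * I"
    unfolding I_def by (rule nn_integral_cmult) auto
  finally have 4: "ennreal (Gamma a) = ennreal b * (ennreal (b powr (a-1)) * I)"
    using 2 by simp
  have 5: "b * b powr (a-1) = b powr a" using powr_add[of b 1 "a-1"] b by simp
  have "ennreal (Gamma a) = ennreal (b powr a) * I"
    unfolding 4 mult.assoc[symmetric] 5[symmetric] using b by (simp add: ennreal_mult)
  hence "ennreal (1 / b powr a) * ennreal (Gamma a) = I"
    using b by (simp add: mult.assoc[symmetric] ennreal_mult[symmetric])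
  thus ?thesis unfolding I_def by (simp add: ennreal_mult'[symmetric] Gamma_real_pos a)
qed

lemma gamma_fin:
  fixes a :: real assumes a: "a > 0"
  shows "(\<integral>\<^sup>+s. ennreal (indicator {0..} s * (exp (- s) * s powr (a-1))) \<partial>lborel) = ennreal (Gamma a)"
proof -
  have 1: "(\<integral>\<^sup>+t. ennreal (indicator {0..} t * (t powr (a-1) / exp t)) \<partial>lborel) = ennreal (Gamma a)"
    by (rule nn_integral_has_integral_lebesgue[OF _ Gamma_integral_real[OF a]]) auto
  show ?thesis unfolding 1[symmetric]
    by (intro nn_integral_cong) (auto simp: exp_minus field_simps)
qed

lemma lig_nn:
  fixes y T :: real assumes y: "y > 0" and T: "T \<ge> 0"
  shows "ennreal (lower_inc_gamma y T) = (\<integral>\<^sup>+s. ennreal (indicator {0..T} s * (exp (- s) * s powr (y-1))) \<partial>lborel)"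
proof -
  let ?f = "\<lambda>s. indicator {0..T} s * (exp (- s) * s powr (y-1))"
  have le: "(\<integral>\<^sup>+s. ennreal (?f s) \<partial>lborel) \<le> (\<integral>\<^sup>+s. ennreal (indicator {0..} s * (exp (- s) * s powr (y-1))) \<partial>lborel)"
    by (intro nn_integral_mono) (auto simp: indicator_def)
  have fin: "(\<integral>\<^sup>+s. ennreal (?f s) \<partial>lborel) < \<infinity>"
    using le unfolding gamma_fin[OF y] by (simp add: le_less_trans)
  have int: "integrable lborel ?f"
    by (rule integrableI_nonneg[OF _ _ fin]) auto
  have "lower_inc_gamma y T = (LBINT s:{0..T}. exp (- s) * s powr (y-1))"
    unfolding lower_inc_gamma_def using T interval_integral_Icc[of 0 T "\<lambda>s. exp (- s) * s powr (y-1)"] by (simp add: zero_ereal_def)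
  also have "\<dots> = integral\<^sup>L lborel ?f"
    by (simp add: set_lebesgue_integral_def)
  finally show ?thesis
    using nn_integral_eq_integral[OF int] by auto
qed

lemma jfiber:
  fixes lam x y t :: real
  assumes lam: "lam > 0" and x: "x > 0" and y: "y > 0" and t: "t > 0"
  shows "ennreal (lower_inc_gamma y (y*t) / Gamma y * t powr (lam - 1) * exp (- x * t)) =
    (\<integral>\<^sup>+w. ennreal (y powr y / Gamma y * t powr (lam+y-1) * (indicator {0..1} w * (w powr (y-1) * exp (-((x+y*w)*t))))) \<partial>lborel)"
proof -
  have "ennreal (lower_inc_gamma y (y*t)) = (\<integral>\<^sup>+s. ennreal (indicator {0..y*t} s * (exp (- s) * s powr (y-1))) \<partial>lborel)"
    using y t by (intro lig_nn) auto
  also have "\<dots> = ennreal y * (\<integral>\<^sup>+u. ennreal (indicator {0..y*t} (0 + y*u) * (exp (- (0 + y*u)) * (0 + y*u) powr (y-1))) \<partial>lborel)"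
    using nn_integral_real_affine[where c=y and t=0 and f="\<lambda>s. ennreal (indicator {0..y*t} s * (exp (- s) * s powr (y-1)))"] y
    by auto
  also have "(\<integral>\<^sup>+u. ennreal (indicator {0..y*t} (0 + y*u) * (exp (- (0 + y*u)) * (0 + y*u) powr (y-1))) \<partial>lborel)
     = (\<integral>\<^sup>+u. ennreal (y powr (y-1)) * ennreal (indicator {0..t} u * (exp (- (y*u)) * u powr (y-1))) \<partial>lborel)"
    using y by (intro nn_integral_cong) (auto simp: indicator_def powr_mult ennreal_mult'[symmetric] zero_le_mult_iff)
  also have "\<dots> = ennreal (y powr (y-1)) * (\<integral>\<^sup>+u. ennreal (indicator {0..t} u * (exp (- (y*u)) * u powr (y-1))) \<partial>lborel)"
    by (rule nn_integral_cmult) auto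
  also have "(\<integral>\<^sup>+u. ennreal (indicator {0..t} u * (exp (- (y*u)) * u powr (y-1))) \<partial>lborel)
     = ennreal t * (\<integral>\<^sup>+w. ennreal (indicator {0..t} (0 + t*w) * (exp (- (y*(0 + t*w))) * (0 + t*w) powr (y-1))) \<partial>lborel)"
    using nn_integral_real_affine[where c=t and t=0 and f="\<lambda>u. ennreal (indicator {0..t} u * (exp (- (y*u)) * u powr (y-1)))"] t
    by auto
  also have "(\<integral>\<^sup>+w. ennreal (indicator {0..t} (0 + t*w) * (exp (- (y*(0 + t*w))) * (0 + t*w) powr (y-1))) \<partial>lborel)
     = (\<integral>\<^sup>+w. ennreal (t powr (y-1)) * ennreal (indicator {0..1} w * (w powr (y-1) * exp (- (y*t*w)))) \<partial>lborel)"
    using t by (intro nn_integral_cong) (auto simp: indicator_def powr_mult ennreal_mult'[symmetric] zero_le_mult_iff mult_ac)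
  also have "\<dots> = ennreal (t powr (y-1)) * (\<integral>\<^sup>+w. ennreal (indicator {0..1} w * (w powr (y-1) * exp (- (y*t*w)))) \<partial>lborel)"
    by (rule nn_integral_cmult) auto
  finally have G: "ennreal (lower_inc_gamma y (y*t)) = ennreal (y * y powr (y-1) * t * t powr (y-1)) *
      (\<integral>\<^sup>+w. ennreal (indicator {0..1} w * (w powr (y-1) * exp (- (y*t*w)))) \<partial>lborel)"
    using y t by (simp add: ennreal_mult mult.assoc)
  define K where "K = t powr (lam - 1) * exp (- x * t) / Gamma y * (y * y powr (y-1) * t * t powr (y-1))"
  have K0: "K \<ge> 0" unfolding K_def using y t by (auto intro!: divide_nonneg_pos Gamma_real_pos)
  have Ksplit: "ennreal K = ennreal (t powr (lam - 1) * exp (- x * t) / Gamma y) * ennreal (y * y powr (y-1) * t * t powr (y-1))"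
    unfolding K_def using y t by (intro ennreal_mult) (auto intro!: divide_nonneg_pos Gamma_real_pos)
  have "lower_inc_gamma y (y*t) / Gamma y * t powr (lam - 1) * exp (- x * t) =
       (t powr (lam - 1) * exp (- x * t) / Gamma y) * lower_inc_gamma y (y*t)" by simp
  then have "ennreal (lower_inc_gamma y (y*t) / Gamma y * t powr (lam - 1) * exp (- x * t)) =
      ennreal (t powr (lam - 1) * exp (- x * t) / Gamma y) * ennreal (lower_inc_gamma y (y*t))"
    using y t by (simp only:) (intro ennreal_mult', auto intro!: divide_nonneg_pos Gamma_real_pos)
  also have "\<dots> = ennreal K * (\<integral>\<^sup>+w. ennreal (indicator {0..1} w * (w powr (y-1) * exp (- (y*t*w)))) \<partial>lborel)"
    unfolding G Ksplit by (simp add: mult.assoc)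
  also have "\<dots> = (\<integral>\<^sup>+w. ennreal K * ennreal (indicator {0..1} w * (w powr (y-1) * exp (- (y*t*w)))) \<partial>lborel)"
    by (rule nn_integral_cmult[symmetric]) auto
  also have "\<dots> = (\<integral>\<^sup>+w. ennreal (y powr y / Gamma y * t powr (lam+y-1) * (indicator {0..1} w * (w powr (y-1) * exp (-((x+y*w)*t))))) \<partial>lborel)"
  proof (intro nn_integral_cong)
    fix w :: real
    have e1: "y powr y = y * y powr (y-1)" using powr_add[of y 1 "y-1"] y by simp
    have e2: "t powr (lam+y-1) = t powr (lam-1) * t * t powr (y-1)"
      using powr_add[of t "lam-1" 1] powr_add[of t "lam" "y-1"] t by (simp add: add_diff_eq)
    have e3: "exp (-((x+y*w)*t)) = exp (- x * t) * exp (- (y*t*w))"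
      by (simp add: exp_add[symmetric] algebra_simps)
    show "ennreal K * ennreal (indicator {0..1} w * (w powr (y-1) * exp (- (y*t*w)))) =
        ennreal (y powr y / Gamma y * t powr (lam+y-1) * (indicator {0..1} w * (w powr (y-1) * exp (-((x+y*w)*t)))))"
      unfolding e1 e2 e3 K_def using K0 unfolding K_def
      by (subst ennreal_mult[symmetric]) (auto simp: ac_simps divide_inverse)
  qed
  finally show ?thesis .
qed

lemma J_nn:
  fixes lam x y :: real
  assumes lam: "lam > 0" and x: "x > 0" and y: "y > 0"
  shows "(\<integral>\<^sup>+t. ennreal (indicator {0<..} t * (lower_inc_gamma y (y*t) / Gamma y * t powr (lam - 1) * exp (- x * t))) \<partial>lborel)
    = ennreal (y powr y * Gamma (lam+y) / Gamma y) *
      (\<integral>\<^sup>+w. ennreal (indicator {0..1} w * (w powr (y-1) * (x+y*w) powr (-(lam+y)))) \<partial>lborel)"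
proof -
  let ?C = "y powr y / Gamma y"
  define \<Phi> where "\<Phi> = (\<lambda>t w. ennreal (indicator {0<..} t * (?C * t powr (lam+y-1) * (indicator {0..1} w * (w powr (y-1) * exp (-((x+y*w)*t)))))))"
  have "(\<integral>\<^sup>+t. ennreal (indicator {0<..} t * (lower_inc_gamma y (y*t) / Gamma y * t powr (lam - 1) * exp (- x * t))) \<partial>lborel)
      = (\<integral>\<^sup>+t. (\<integral>\<^sup>+w. \<Phi> t w \<partial>lborel) \<partial>lborel)"
  proof (intro nn_integral_cong)
    fix t :: real
    show "ennreal (indicator {0<..} t * (lower_inc_gamma y (y*t) / Gamma y * t powr (lam - 1) * exp (- x * t))) = (\<integral>\<^sup>+w. \<Phi> t w \<partial>lborel)"
    proof (cases "t > 0")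
      case True
      then show ?thesis unfolding \<Phi>_def using jfiber[OF lam x y True] by simp
    next
      case False
      then show ?thesis unfolding \<Phi>_def by simp
    qed
  qed
  also have "\<dots> = (\<integral>\<^sup>+w. (\<integral>\<^sup>+t. \<Phi> t w \<partial>lborel) \<partial>lborel)"
    by (rule lborel_pair.Fubini'[symmetric]) (simp add: \<Phi>_def case_prod_unfold)
  also have "\<dots> = (\<integral>\<^sup>+w. ennreal (y powr y * Gamma (lam+y) / Gamma y) * ennreal (indicator {0..1} w * (w powr (y-1) * (x+y*w) powr (-(lam+y)))) \<partial>lborel)"
  proof (intro nn_integral_cong)
    fix w :: real
    show "(\<integral>\<^sup>+t. \<Phi> t w \<partial>lborel) = ennreal (y powr y * Gamma (lam+y) / Gamma y) * ennreal (indicator {0..1} w * (w powr (y-1) * (x+y*w) powr (-(lam+y))))"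
    proof (cases "w \<in> {0..1}")
      case True
      have b: "x + y * w > 0" using True x y by (auto intro: add_pos_nonneg)
      have "(\<integral>\<^sup>+t. \<Phi> t w \<partial>lborel) = (\<integral>\<^sup>+t. ennreal (?C * w powr (y-1)) * ennreal (indicator {0<..} t * (t powr (lam+y-1) * exp (-((x+y*w)*t)))) \<partial>lborel)"
        unfolding \<Phi>_def using True y
        by (intro nn_integral_cong) (auto simp: indicator_def ennreal_mult[symmetric] Gamma_real_pos mult_ac)
      also have "\<dots> = ennreal (?C * w powr (y-1)) * (\<integral>\<^sup>+t. ennreal (indicator {0<..} t * (t powr (lam+y-1) * exp (-((x+y*w)*t)))) \<partial>lborel)"
        by (rule nn_integral_cmult) auto
      also have "\<dots> = ennreal (?C * w powr (y-1)) * ennreal (Gamma (lam+y) / (x+y*w) powr (lam+y))"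
        using gamma_nn[of "lam+y" "x+y*w"] lam y b by simp
      also have "\<dots> = ennreal (y powr y * Gamma (lam+y) / Gamma y) * ennreal (indicator {0..1} w * (w powr (y-1) * (x+y*w) powr (-(lam+y))))"
      proof -
        have e: "(x+y*w) powr (- lam - y) = 1 / (x+y*w) powr (lam+y)" using powr_minus_divide[of "x+y*w" "lam+y"] by simp
        have g: "Gamma y > 0" using y by (rule Gamma_real_pos)
        have p: "(x+y*w) powr (lam+y) > 0" using b by simp
        show ?thesis using True y b lam g p
          by (simp add: ennreal_mult[symmetric] e)
      qed
      finally show ?thesis .
    next
      case False
      then show ?thesis unfolding \<Phi>_def by simp
    qed
  qed
  also have "\<dots> = ennreal (y powr y * Gamma (lam+y) / Gamma y) *
      (\<integral>\<^sup>+w. ennreal (indicator {0..1} w * (w powr (y-1) * (x+y*w) powr (-(lam+y)))) \<partial>lborel)"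
    by (rule nn_integral_cmult) auto
  finally show ?thesis .
qed



lemma subst_alg:
  fixes lam x y w :: real
  assumes x: "x > 0" and y: "y > 0" and w: "w \<ge> 0"
  shows "(y*w/(x+y*w)) powr (y-1) * (1 - y*w/(x+y*w)) powr (lam-1) * (x*y/(x+y*w)^2)
       = x powr lam * y powr y * (w powr (y-1) * (x+y*w) powr (-(lam+y)))"
proof -
  define D where "D = x + y*w"
  have D: "D > 0" unfolding D_def using x y w by (auto intro: add_pos_nonneg)
  have h1: "(y*w/D) powr (y-1) = y powr (y-1) * w powr (y-1) / D powr (y-1)"
    using y w D by (simp add: powr_divide powr_mult)
  have h2: "1 - y*w/D = x/D" using D unfolding D_def by (simp add: field_simps)
  have h3: "(x/D) powr (lam-1) = x powr (lam-1) / D powr (lam-1)"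
    using x D by (simp add: powr_divide)
  have h4: "x powr lam = x powr (lam-1) * x" using powr_add[of x "lam-1" 1] x by simp
  have h4': "y powr y = y powr (y-1) * y" using powr_add[of y "y-1" 1] y by simp
  have h5: "D powr (lam+y) = D powr (y-1) * D powr (lam-1) * D^2"
  proof -
    have e: "lam + y = (y-1)+(lam-1)+2" by simp
    have "D powr (lam+y) = D powr (y-1) * D powr (lam-1) * D powr 2"
      by (simp only: e powr_add)
    also have "D powr 2 = D^2" using D by (simp add: powr_numeral)
    finally show ?thesis .
  qed
  have h6: "D powr (-(lam+y)) = 1 / D powr (lam+y)" using powr_minus_divide[of D "lam+y"] by simp
  have p1: "D powr (y-1) > 0" "D powr (lam-1) > 0" using D by auto
  show ?thesis
    unfolding D_def[symmetric] h1 h2 h3 h4 h4' h6 h5 using D p1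
    by (simp add: field_simps)
qed


lemma beta_sub:
  fixes lam x y :: real
  assumes lam: "lam > 0" and x: "x > 0" and y: "y > 0"
  shows "(\<integral>\<^sup>+t. ennreal (indicator {x/(x+y)<..1} t * (t powr (lam-1) * (1-t) powr (y-1))) \<partial>lborel)
    = ennreal (x powr lam * y powr y) *
      (\<integral>\<^sup>+w. ennreal (indicator {0..1} w * (w powr (y-1) * (x+y*w) powr (-(lam+y)))) \<partial>lborel)"
proof -
  define f where "f = (\<lambda>s::real. s powr (y-1) * (1-s) powr (lam-1))"
  define g where "g = (\<lambda>w::real. y*w/(x+y*w))"
  define g' where "g' = (\<lambda>w::real. x*y/(x+y*w)^2)"
  have cd: "x/(x+y) = 1 - y/(x+y)" using x y by (simp add: field_simps)
  have "(\<integral>\<^sup>+t. ennreal (indicator {x/(x+y)<..1} t * (t powr (lam-1) * (1-t) powr (y-1))) \<partial>lborel)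
     = (\<integral>\<^sup>+s. ennreal (indicator {x/(x+y)<..1} (1 - s) * ((1 - s) powr (lam-1) * s powr (y-1))) \<partial>lborel)"
    using nn_integral_real_affine[where c="-1" and t=1 and f="\<lambda>t. ennreal (indicator {x/(x+y)<..1} t * (t powr (lam-1) * (1-t) powr (y-1)))"]
    by simp
  also have "\<dots> = (\<integral>\<^sup>+s. ennreal (indicator {0..<y/(x+y)} s * f s) \<partial>lborel)"
    unfolding f_def cd by (intro nn_integral_cong) (auto simp: indicator_def mult_ac)
  also have "\<dots> = (\<integral>\<^sup>+s. ennreal (f s * indicator {g 0..g 1} s) \<partial>lborel)"
    unfolding g_def
    by (intro nn_integral_cong_AE eventually_mono[OF AE_lborel_singleton[of "y/(x+y)"]])
       (auto simp: indicator_def)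
  also have "\<dots> = (\<integral>\<^sup>+w. ennreal (f (g w) * g' w * indicator {0..1} w) \<partial>lborel)"
  proof (rule nn_integral_substitution)
    show "set_borel_measurable borel {g 0..g 1} f" unfolding set_borel_measurable_def f_def by measurable
    show "(g has_real_derivative g' w) (at w)" if "w \<in> {0..1}" for w
    proof -
      have "x + y*w > 0" using that x y by (auto intro: add_pos_nonneg)
      then show ?thesis unfolding g_def g'_def
        by (auto intro!: derivative_eq_intros simp: field_simps power2_eq_square)
    qed
    show "continuous_on {0..1} g'" unfolding g'_def using x y
    proof (intro continuous_intros ballI)
      fix w :: real assume "w \<in> {0..1}"
      then have "x + y*w > 0" using x y by (auto intro: add_pos_nonneg)
      then show "(x + y*w)^2 \<noteq> 0" by simp
    qed
    show "0 \<le> g' w" if "w \<in> {0..1}" for w unfolding g'_def using x y by simp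
  qed simp
  also have "\<dots> = (\<integral>\<^sup>+w. ennreal (x powr lam * y powr y) * ennreal (indicator {0..1} w * (w powr (y-1) * (x+y*w) powr (-(lam+y)))) \<partial>lborel)"
  proof (intro nn_integral_cong)
    fix w :: real
    show "ennreal (f (g w) * g' w * indicator {0..1} w) = ennreal (x powr lam * y powr y) * ennreal (indicator {0..1} w * (w powr (y-1) * (x+y*w) powr (-(lam+y))))"
    proof (cases "w \<in> {0..1}")
      case True
      then show ?thesis unfolding f_def g_def g'_def using subst_alg[OF x y, of w lam] x y
        by (simp add: ennreal_mult[symmetric])
    qed simp
  qed
  also have "\<dots> = ennreal (x powr lam * y powr y) *
      (\<integral>\<^sup>+w. ennreal (indicator {0..1} w * (w powr (y-1) * (x+y*w) powr (-(lam+y)))) \<partial>lborel)"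
    by (rule nn_integral_cmult) auto
  finally show ?thesis .
qed


theorem lemma2p1:
  fixes lam x y :: real
  assumes "lam > 0" and "x > 0" and "y > 0"
  shows "Gamma (lam + y) / Gamma y * inc_beta lam y (x / (x + y))
       = Gamma lam - x powr lam *
           (LBINT t=0..\<infinity>. lower_inc_gamma y (y * t) / Gamma y * t powr (lam - 1) * exp (- x * t))"
proof -
  note lam = assms(1) and x = assms(2) and y = assms(3)
  define c where "c = x / (x + y)"
  have c0: "0 < c" and c1: "c < 1" unfolding c_def using x y by (auto simp: field_simps)
  define fb where "fb = (\<lambda>t::real. t powr (lam-1) * (1-t) powr (y-1))"
  define P where "P = (\<integral>\<^sup>+t. ennreal (indicator {0..c} t * fb t) \<partial>lborel)"
  define Q where "Q = (\<integral>\<^sup>+t. ennreal (indicator {c<..1} t * fb t) \<partial>lborel)"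
  define W where "W = (\<integral>\<^sup>+w. ennreal (indicator {0..1} w * (w powr (y-1) * (x+y*w) powr (-(lam+y)))) \<partial>lborel)"
  define Jr where "Jr = (\<lambda>t. indicator {0<..} t * (lower_inc_gamma y (y*t) / Gamma y * t powr (lam - 1) * exp (- x * t)))"
  have gy: "Gamma y > 0" using y by (rule Gamma_real_pos)
  have gly: "Gamma (lam + y) > 0" using lam y by (intro Gamma_real_pos) simp
  have Beta_nn: "(\<integral>\<^sup>+t. ennreal (indicator {0..1} t * fb t) \<partial>lborel) = ennreal (Beta lam y)"
    unfolding fb_def by (rule nn_integral_has_integral_lebesgue[OF _ has_integral_Beta_real[OF lam y]]) auto
  have PQ: "P + Q = ennreal (Beta lam y)"
  proof -
    have "P + Q = (\<integral>\<^sup>+t. ennreal (indicator {0..c} t * fb t) + ennreal (indicator {c<..1} t * fb t) \<partial>lborel)"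
      unfolding P_def Q_def by (rule nn_integral_add[symmetric]) (auto simp: fb_def)
    also have "\<dots> = (\<integral>\<^sup>+t. ennreal (indicator {0..1} t * fb t) \<partial>lborel)"
      using c0 c1 by (intro nn_integral_cong) (auto simp: indicator_def fb_def)
    finally show ?thesis using Beta_nn by simp
  qed
  have Pfin: "P < \<infinity>" and Qfin: "Q < \<infinity>" using PQ by (metis ennreal_add_eq_top ennreal_neq_top infinity_ennreal_def less_top)+
  have IB: "inc_beta lam y c = enn2real P"
  proof -
    have "inc_beta lam y c = (LBINT t:{0..c}. fb t)"
      unfolding inc_beta_def fb_def using c0 interval_integral_Icc[of 0 c "\<lambda>t. t powr (lam - 1) * (1 - t) powr (y - 1)"]
      by (simp add: zero_ereal_def)
    also have "\<dots> = integral\<^sup>L lborel (\<lambda>t. indicator {0..c} t * fb t)"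
      by (simp add: set_lebesgue_integral_def)
    also have "\<dots> = enn2real P" unfolding P_def
      by (rule integral_eq_nn_integral) (auto simp: fb_def)
    finally show ?thesis .
  qed
  have lig_eq: "lower_inc_gamma y T = enn2real (\<integral>\<^sup>+s. ennreal (indicator {0..T} s * (exp (- s) * s powr (y-1))) \<partial>lborel)"
    if "T \<ge> 0" for T
  proof -
    have "lower_inc_gamma y T \<ge> 0"
      unfolding lower_inc_gamma_def using that interval_integral_Icc[of 0 T "\<lambda>s. exp (- s) * s powr (y-1)"]
      by (auto simp: zero_ereal_def set_lebesgue_integral_def intro!: integral_nonneg)
    then show ?thesis using lig_nn[OF y that] by (metis enn2real_ennreal)
  qed
  have Jr_alt: "Jr = (\<lambda>t. indicator {0<..} t * (enn2real (\<integral>\<^sup>+s. ennreal (indicator {0..y*t} s * (exp (- s) * s powr (y-1))) \<partial>lborel) / Gamma y * t powr (lam - 1) * exp (- x * t)))"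
  proof
    fix t show "Jr t = indicator {0<..} t * (enn2real (\<integral>\<^sup>+s. ennreal (indicator {0..y*t} s * (exp (- s) * s powr (y-1))) \<partial>lborel) / Gamma y * t powr (lam - 1) * exp (- x * t))"
      unfolding Jr_def using lig_eq[of "y*t"] y by (cases "t > 0") auto
  qed
  have m1: "(\<lambda>t. \<integral>\<^sup>+s. ennreal (indicator {0..y*t} s * (exp (- s) * s powr (y-1))) \<partial>lborel) \<in> borel_measurable lborel"
    by (rule lborel.borel_measurable_nn_integral) (unfold case_prod_unfold indicator_def atLeastAtMost_iff, measurable)
  have Jr_meas: "Jr \<in> borel_measurable lborel"
    unfolding Jr_alt using m1 by simp
  have J: "(LBINT t=0..\<infinity>. lower_inc_gamma y (y * t) / Gamma y * t powr (lam - 1) * exp (- x * t)) = enn2real (\<integral>\<^sup>+t. ennreal (Jr t) \<partial>lborel)"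
  proof -
    have "(LBINT t=0..\<infinity>. lower_inc_gamma y (y * t) / Gamma y * t powr (lam - 1) * exp (- x * t)) = integral\<^sup>L lborel Jr"
      using interval_integral_Ioi[of 0 "\<lambda>t. lower_inc_gamma y (y * t) / Gamma y * t powr (lam - 1) * exp (- x * t)"]
      by (simp add: zero_ereal_def set_lebesgue_integral_def Jr_def)
    also have "\<dots> = enn2real (\<integral>\<^sup>+t. ennreal (Jr t) \<partial>lborel)"
    proof (rule integral_eq_nn_integral[OF Jr_meas])
      show "AE t in lborel. 0 \<le> Jr t"
      proof (rule AE_I2)
        fix t
        have "lower_inc_gamma y (y*t) \<ge> 0" if "t > 0"
          using lig_eq[of "y*t"] that y by simp
        then show "0 \<le> Jr t" unfolding Jr_def using gy
          by (cases "t > 0") (auto intro!: mult_nonneg_nonneg divide_nonneg_pos)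
      qed
    qed
    finally show ?thesis .
  qed
  have JW: "(\<integral>\<^sup>+t. ennreal (Jr t) \<partial>lborel) = ennreal (y powr y * Gamma (lam+y) / Gamma y) * W"
    unfolding Jr_def W_def by (rule J_nn[OF lam x y])
  have QW: "Q = ennreal (x powr lam * y powr y) * W"
    unfolding Q_def W_def c_def fb_def by (rule beta_sub[OF lam x y])
  have key: "ennreal (x powr lam) * (\<integral>\<^sup>+t. ennreal (Jr t) \<partial>lborel) = ennreal (Gamma (lam+y) / Gamma y) * Q"
  proof -
    have "ennreal (x powr lam) * ennreal (y powr y * Gamma (lam+y) / Gamma y) = ennreal (Gamma (lam+y) / Gamma y) * ennreal (x powr lam * y powr y)"
      using gy gly x y by (simp add: ennreal_mult[symmetric] mult_ac)
    then show ?thesis unfolding JW QW by (simp add: mult.assoc[symmetric])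
  qed
  have xJ: "x powr lam * enn2real (\<integral>\<^sup>+t. ennreal (Jr t) \<partial>lborel) = Gamma (lam+y) / Gamma y * enn2real Q"
  proof -
    have "x powr lam * enn2real (\<integral>\<^sup>+t. ennreal (Jr t) \<partial>lborel) = enn2real (ennreal (x powr lam) * (\<integral>\<^sup>+t. ennreal (Jr t) \<partial>lborel))"
      by (simp add: enn2real_mult)
    also have "\<dots> = enn2real (ennreal (Gamma (lam+y) / Gamma y) * Q)" unfolding key ..
    also have "\<dots> = Gamma (lam+y) / Gamma y * enn2real Q"
      using gy gly by (simp add: enn2real_mult)
    finally show ?thesis .
  qed
  have sumPQ: "enn2real P + enn2real Q = Beta lam y"
  proof -
    obtain p where p: "P = ennreal p" "p \<ge> 0" using Pfin by (cases P rule: ennreal_cases) auto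
    obtain q where q: "Q = ennreal q" "q \<ge> 0" using Qfin by (cases Q rule: ennreal_cases) auto
    have B0: "Beta lam y \<ge> 0" unfolding Beta_def using gy gly Gamma_real_pos[OF lam] by simp
    have "ennreal (p + q) = ennreal (Beta lam y)" using PQ p q by (simp add: ennreal_plus)
    then have "p + q = Beta lam y" by (subst (asm) ennreal_inj) (use p q B0 in auto)
    then show ?thesis using p q by simp
  qed
  have GB: "Gamma (lam+y) / Gamma y * Beta lam y = Gamma lam"
    unfolding Beta_def using gy gly by (simp add: field_simps)
  have fin: "Gamma (lam+y) / Gamma y * enn2real P = Gamma lam - Gamma (lam+y) / Gamma y * enn2real Q"
  proof -
    have "enn2real P = Beta lam y - enn2real Q" using sumPQ by linarith
    then have "Gamma (lam+y) / Gamma y * enn2real P = Gamma (lam+y) / Gamma y * Beta lam y - Gamma (lam+y) / Gamma y * enn2real Q"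
      by (simp only: right_diff_distrib)
    then show ?thesis by (simp only: GB)
  qed
  show ?thesis
    unfolding J xJ c_def[symmetric] IB by (rule fin)
qed

end
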